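(* Let $A$ be a real $m\times m$ matrix, $f,f_\delta\in\mathbb{R}^m$ with $\|f_\delta-f\|\le\delta$, $q\in(0,1)$. Define $u_1=u_1^\delta=0$, $u_{n+1}=q^nT_{q^n}^{-1}u_n+T_{q^n}^{-1}A^*f$ and $u_{n+1}^\delta=q^nT_{q^n}^{-1}u_n^\delta+T_{q^n}^{-1}A^*f_\delta$ for $n\ge1$. Then for all $n\ge1$, $$\|u_n^\delta-u_n\|\le\frac{\sqrt q}{1-\sqrt q}\,\frac{\delta}{2\sqrt{q^n}}.$$
   Context: $A^*$ is the transpose of $A$, $T:=A^*A$, $T_a:=T+aI$ for $a>0$; $\|\cdot\|$ is the Euclidean norm. *)

theory Defs
  imports "HOL-Analysis.Analysis"
begin

definition Tmat :: "real^'m^'m \<Rightarrow> real^'m^'m" where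
  "Tmat A = transpose A ** A"

definition Ta :: "real^'m^'m \<Rightarrow> real \<Rightarrow> real^'m^'m" where
  "Ta A a = Tmat A + a *\<^sub>R mat 1"

text \<open>The iteration u_1 = 0, u_{n+1} = q^n T_{q^n}^{-1} u_n + T_{q^n}^{-1} A^* g.
  iter A g q n is u_n; the value at index 0 is unused (set to 0).\<close>
fun iter :: "real^'m^'m \<Rightarrow> real^'m \<Rightarrow> real \<Rightarrow> nat \<Rightarrow> real^'m" where
  "iter A g q 0 = 0"
| "iter A g q (Suc 0) = 0"
| "iter A g q (Suc (Suc k)) =
     (let n = Suc k in
       (q ^ n) *\<^sub>R (matrix_inv (Ta A (q ^ n)) *v iter A g q n)
       + matrix_inv (Ta A (q ^ n)) *v (transpose A *v g))"

end

theory Submission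
  imports Defs
begin

lemma Ta_apply: "Ta A a *v y = transpose A *v (A *v y) + a *\<^sub>R y"
proof -
  have "(a *\<^sub>R mat 1) *v y = a *\<^sub>R y"
  proof -
    have "\<And>i j. a * (if i = j then 1 else 0) * y $ j = (if i = j then a * y $ j else 0)" by simp
    then show ?thesis by (simp add: vec_eq_iff matrix_vector_mult_def mat_def)
  qed
  moreover have "Ta A a *v y = (transpose A ** A) *v y + (a *\<^sub>R mat 1) *v y"
    unfolding Ta_def Tmat_def by (rule matrix_vector_mult_add_rdistrib)
  ultimately show ?thesis by (simp add: matrix_vector_mul_assoc)
qed

lemma Ta_quad: "y \<bullet> (Ta A a *v y) = (A *v y) \<bullet> (A *v y) + a * (y \<bullet> y)"
proof -
  have "y \<bullet> ((A *v y) v* A) = (A *v y) \<bullet> (A *v y)"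
    by (subst inner_commute) (simp add: dot_lmul_matrix)
  thus ?thesis unfolding Ta_apply by (simp add: inner_add_right)
qed

lemma Ta_inv: assumes "0 < a" shows "Ta A a *v (matrix_inv (Ta A a) *v x) = x"
proof -
  have "inj ((*v) (Ta A a))"
  proof (rule linear_injective_0[THEN iffD2])
    show "linear ((*v) (Ta A a))" by (simp add: matrix_vector_mul_linear)
    show "\<forall>y. Ta A a *v y = 0 \<longrightarrow> y = 0"
    proof (intro allI impI)
      fix y assume h: "Ta A a *v y = 0"
      have "(A *v y) \<bullet> (A *v y) + a * (y \<bullet> y) = 0" using Ta_quad[of y A a] h by simp
      moreover have "(A *v y) \<bullet> (A *v y) \<ge> 0" "y \<bullet> y \<ge> 0" by auto
      ultimately have "a * (y \<bullet> y) = 0" using assms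
        by (smt (verit) mult_nonneg_nonneg)
      thus "y = 0" using assms by simp
    qed
  qed
  then have "invertible (Ta A a)"
    using matrix_left_invertible_injective invertible_left_inverse by blast
  then have "Ta A a ** matrix_inv (Ta A a) = mat 1"
    unfolding invertible_def matrix_inv_def by (metis (mono_tags, lifting) someI_ex)
  then show ?thesis by (metis matrix_vector_mul_assoc matrix_vector_mul_lid)
qed

lemma bound1: assumes "0 < a" shows "norm (a *\<^sub>R (matrix_inv (Ta A a) *v x)) \<le> norm x"
proof -
  define y where "y = matrix_inv (Ta A a) *v x"
  have e: "Ta A a *v y = x" using Ta_inv[OF assms] y_def by simp
  have "a * (y \<bullet> y) \<le> y \<bullet> x" using Ta_quad[of y A a] e by auto
  also have "\<dots> \<le> norm y * norm x" by (rule norm_cauchy_schwarz)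
  finally have "a * norm y * norm y \<le> norm y * norm x" by (simp add: power2_eq_square dot_square_norm mult.assoc)
  hence "a * norm y \<le> norm x"
    by (cases "norm y = 0") (auto simp: mult.commute[of _ "norm y"] mult.assoc)
  thus ?thesis using assms by (simp add: y_def[symmetric])
qed

lemma quad_aux: "(s::real) * G - s^2 \<le> G^2 / 4"
proof -
  have "0 \<le> (s - G/2)^2" by simp
  thus ?thesis by (simp add: power2_eq_square algebra_simps)
qed

lemma bound2: assumes "0 < a"
  shows "norm (matrix_inv (Ta A a) *v (transpose A *v g)) \<le> norm g / (2 * sqrt a)"
proof -
  define y where "y = matrix_inv (Ta A a) *v (transpose A *v g)"
  have e: "Ta A a *v y = transpose A *v g" using Ta_inv[OF assms] y_def by simp
  have "y \<bullet> (transpose A *v g) = (A *v y) \<bullet> g"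
    by (simp add: inner_commute[of y] dot_lmul_matrix, rule inner_commute)
  also have "\<dots> \<le> norm (A *v y) * norm g" by (rule norm_cauchy_schwarz)
  finally have "(A *v y) \<bullet> (A *v y) + a * (y \<bullet> y) \<le> norm (A *v y) * norm g"
    using Ta_quad[of y A a] e by simp
  hence 1: "norm (A *v y)^2 + a * norm y ^2 \<le> norm (A *v y) * norm g"
    by (simp add: power2_norm_eq_inner)
  have 2: "norm (A *v y) * norm g - norm (A *v y)^2 \<le> norm g ^2 / 4"
    by (rule quad_aux)
  from 1 2 have "a * norm y ^2 \<le> norm g ^2 / 4" by linarith
  hence "norm y ^2 \<le> (norm g / (2 * sqrt a))^2" using assms
    by (simp add: power_divide power_mult_distrib field_simps)
  moreover have "0 \<le> norm g / (2 * sqrt a)" using assms by simp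
  ultimately have "norm y \<le> norm g / (2 * sqrt a)"
    by (rule power2_le_imp_le)
  thus ?thesis by (simp add: y_def)
qed

lemma step:
  assumes "norm (fd - f) \<le> d" "0 < q"
  shows "norm (iter A fd q (Suc (Suc k)) - iter A f q (Suc (Suc k)))
     \<le> norm (iter A fd q (Suc k) - iter A f q (Suc k)) + d / (2 * sqrt (q ^ Suc k))"
proof -
  define a where "a = q ^ Suc k"
  have a: "0 < a" using assms by (simp add: a_def)
  define M where "M = matrix_inv (Ta A a)"
  define e where "e = iter A fd q (Suc k) - iter A f q (Suc k)"
  have "iter A fd q (Suc (Suc k)) - iter A f q (Suc (Suc k))
      = a *\<^sub>R (M *v e) + M *v (transpose A *v (fd - f))"
  proof -
    have it: "\<And>g. iter A g q (Suc (Suc k)) = a *\<^sub>R (M *v iter A g q (Suc k)) + M *v (transpose A *v g)"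
      unfolding a_def M_def by (simp only: iter.simps Let_def)
    show ?thesis unfolding it e_def by (simp add: algebra_simps)
  qed
  also have "norm \<dots> \<le> norm (a *\<^sub>R (M *v e)) + norm (M *v (transpose A *v (fd - f)))"
    by (rule norm_triangle_ineq)
  also have "\<dots> \<le> norm e + norm (fd - f) / (2 * sqrt a)"
    using bound1[OF a] bound2[OF a] unfolding M_def by (rule add_mono)
  also have "\<dots> \<le> norm e + d / (2 * sqrt a)"
    using assms a by (simp add: divide_right_mono)
  finally show ?thesis by (simp add: e_def a_def)
qed

theorem lemma3p2:
  fixes A :: "real^'m^'m" and f f\<delta> :: "real^'m" and \<delta> q :: real and n :: nat
  assumes "norm (f\<delta> - f) \<le> \<delta>"
    and "0 < q" and "q < 1"
    and "1 \<le> n"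
  shows "norm (iter A f\<delta> q n - iter A f q n)
           \<le> sqrt q / (1 - sqrt q) * (\<delta> / (2 * sqrt (q ^ n)))"
proof -
  define r where "r = sqrt q"
  have r: "0 < r" "r < 1" using assms by (auto simp: r_def)
  have d: "0 \<le> \<delta>" using assms(1) norm_ge_zero order_trans by blast
  have sq: "\<And>k. sqrt (q ^ k) = r ^ k" by (simp add: r_def real_sqrt_power)
  have "\<forall>k. norm (iter A f\<delta> q (Suc k) - iter A f q (Suc k))
           \<le> r / (1 - r) * (\<delta> / (2 * r ^ Suc k))"
  proof
    fix k show "norm (iter A f\<delta> q (Suc k) - iter A f q (Suc k))
           \<le> r / (1 - r) * (\<delta> / (2 * r ^ Suc k))"
    proof (induction k)
      case 0
      then show ?case using r d by simp
    next
      case (Suc k)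
      have eq: "r / (1 - r) * (\<delta> / (2 * r ^ Suc k)) + \<delta> / (2 * r ^ Suc k)
            = r / (1 - r) * (\<delta> / (2 * r ^ Suc (Suc k)))"
        using r by (simp add: field_simps)
      show ?case
        using step[OF assms(1,2), of A k] Suc.IH eq unfolding sq by linarith
    qed
  qed
  moreover obtain k where n: "n = Suc k" using assms(4) by (cases n) auto
  ultimately have "norm (iter A f\<delta> q n - iter A f q n) \<le> r / (1 - r) * (\<delta> / (2 * r ^ n))"
    by blast
  then show ?thesis unfolding sq r_def .
qed

end
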